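(* Define, for every $\sigma$-algebra $\mathcal{A}$ and $P,Q\in\Delta(\Theta,\mathcal{A})$, $D(Q\|P)=\operatorname{ess\,sup}_P(1-\frac{dQ}{dP})$ if $Q\ll P$ and $D(Q\|P)=\infty$ otherwise (the contamination divergence). Then $D$ satisfies properties (D1)–(D5) below. Moreover, for every $P\in\Delta(\Theta,\mathcal{B})$ and $\eta>0$, $$\{Q\in\Delta(\Theta,\mathcal{B}):D(Q\|P)\le\eta\}=\{Q\in\Delta(\Theta,\mathcal{B}):Q=(1-\eta)P+\eta R\text{ for some }R\in\Delta(\Theta,\mathcal{B})\text{ with }R\ll P\}.$$
   Context: $\Theta=[\underline\theta,\bar\theta]\subset\mathbb{R}$, Borel $\sigma$-algebra $\mathcal{B}$; "$\sigma$-algebra" means sub-$\sigma$-algebra of $\mathcal{B}$; $\Delta(\Theta,\mathcal{A})$ is the set of probability measures on $(\Theta,\mathcal{A})$; for $\mathcal{E}\subset\mathcal{A}$, $P_{\mathcal{E}}$ is the restriction of $P$ to $\mathcal{E}$. Properties, for every $\sigma$-algebra $\mathcal{A}$ and $P,Q\in\Delta(\Theta,\mathcal{A})$: (D1) $D(Q\|P)=0$ if $Q=P$; (D2) if $Q\ll P$ and $dQ/dP$ is bounded, $\epsilon\mapsto D(\epsilon Q+(1-\epsilon)P\|P)$ is continuous on $[0,1]$; (D3) $D(Q\|P)<\infty$ implies $Q\ll P$; (D4) $D(Q_{\mathcal{E}}\|P_{\mathcal{E}})\le D(Q\|P)$ for every sub-$\sigma$-algebra $\mathcal{E}\subset\mathcal{A}$;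 (D5) $D(Q_{\mathcal{E}}\|P_{\mathcal{E}})=D(Q\|P)$ if $dQ_{\mathcal{E}}/dP_{\mathcal{E}}=dQ/dP$ $P$-a.e. *)

theory Defs
  imports "HOL-Probability.Probability"
begin

definition Theta_B :: "real \<Rightarrow> real \<Rightarrow> real measure" where
  "Theta_B lo hi = restrict_space borel {lo..hi}"

text \<open>A sigma-algebra on Theta (sub-sigma-algebra of B) is represented as a measurable
  space A with subalgebra (Theta_B lo hi) A.\<close>

definition prob_measures :: "'a measure \<Rightarrow> 'a measure set" where
  "prob_measures A = {P. prob_space P \<and> space P = space A \<and> sets P = sets A}"

definition contam_div :: "'a measure \<Rightarrow> 'a measure \<Rightarrow> ereal" where
  "contam_div Q P =
     (if absolutely_continuous P Q
      then esssup P (\<lambda>x. 1 - enn2ereal (RN_deriv P Q x))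
      else \<infinity>)"

definition mixture :: "real \<Rightarrow> 'a measure \<Rightarrow> 'a measure \<Rightarrow> 'a measure" where
  "mixture e Q P = measure_of (space P) (sets P)
     (\<lambda>S. ennreal e * emeasure Q S + ennreal (1 - e) * emeasure P S)"

end

theory Submission
  imports Defs
begin


lemma emeasure_lincomb:
  assumes P: "finite_measure P" and Q: "finite_measure Q" and sQ: "sets Q = sets P"
    and mu: "\<And>A. A \<in> sets P \<Longrightarrow> \<mu> A = ennreal (a * measure Q A + b * measure P A)"
    and nn: "\<And>A. A \<in> sets P \<Longrightarrow> 0 \<le> a * measure Q A + b * measure P A"
    and A: "A \<in> sets P"
  shows "emeasure (measure_of (space P) (sets P) \<mu>) A = \<mu> A"
proof (rule emeasure_measure_of_sigma[OF _ _ _ A])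
  show "sigma_algebra (space P) (sets P)" by (rule sets.sigma_algebra_axioms)
  show "positive (sets P) \<mu>" unfolding positive_def using mu[of "{}"] by simp
  show "countably_additive (sets P) \<mu>" unfolding countably_additive_def
  proof (intro allI impI)
    fix F :: "nat \<Rightarrow> _" assume F: "range F \<subseteq> sets P" "disjoint_family F" "\<Union>(F ` UNIV) \<in> sets P"
    have FQ: "range F \<subseteq> sets Q" using F sQ by simp
    have sP: "(\<lambda>i. measure P (F i)) sums (measure P (\<Union>i. F i))"
      by (rule measure_UNION[OF F(1,2)]) (simp add: finite_measure.emeasure_finite[OF P])
    have sQ': "(\<lambda>i. measure Q (F i)) sums (measure Q (\<Union>i. F i))"
      by (rule measure_UNION[OF FQ F(2)]) (simp add: finite_measure.emeasure_finite[OF Q])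
    have s: "(\<lambda>i. a * measure Q (F i) + b * measure P (F i)) sums (a * measure Q (\<Union>i. F i) + b * measure P (\<Union>i. F i))"
      by (intro sums_add sums_mult sP sQ')
    have "(\<Sum>i. \<mu> (F i)) = (\<Sum>i. ennreal (a * measure Q (F i) + b * measure P (F i)))"
      using F(1) mu by auto
    also have "\<dots> = ennreal (\<Sum>i. a * measure Q (F i) + b * measure P (F i))"
      using F(1) nn s by (intro suminf_ennreal2) (auto simp: sums_iff)
    also have "\<dots> = \<mu> (\<Union>(F ` UNIV))"
      using s F(3) mu by (simp add: sums_iff)
    finally show "(\<Sum>i. \<mu> (F i)) = \<mu> (\<Union>(F ` UNIV))" .
  qed
qed

lemma dens_lower:
  assumes f[measurable]: "f \<in> borel_measurable M" and fin: "emeasure M (space M) \<noteq> \<infinity>"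
    and le: "\<And>A. A \<in> sets M \<Longrightarrow> c * emeasure M A \<le> (\<integral>\<^sup>+x. f x * indicator A x \<partial>M)"
    and cfin: "c \<noteq> \<infinity>"
  shows "AE x in M. c \<le> f x"
proof -
  define N where "N = {x\<in>space M. f x < c}"
  have N[measurable]: "N \<in> sets M" unfolding N_def by measurable
  have eq: "(\<integral>\<^sup>+x. (c - f x) * indicator N x \<partial>M) + (\<integral>\<^sup>+x. f x * indicator N x \<partial>M)
      = (\<integral>\<^sup>+x. c * indicator N x \<partial>M)"
    by (subst nn_integral_add[symmetric]) (auto intro!: nn_integral_cong simp: N_def indicator_def
         intro!: diff_add_cancel_ennreal less_imp_le)
  have cN: "(\<integral>\<^sup>+x. c * indicator N x \<partial>M) = c * emeasure M N" using N by (rule nn_integral_cmult_indicator)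
  have fin2: "c * emeasure M N \<noteq> \<infinity>"
    using cfin fin emeasure_space[of M N]
    by (metis ennreal_mult_eq_top_iff infinity_ennreal_def neq_top_trans)
  have "(\<integral>\<^sup>+x. (c - f x) * indicator N x \<partial>M) + (\<integral>\<^sup>+x. f x * indicator N x \<partial>M)
      \<le> 0 + (\<integral>\<^sup>+x. f x * indicator N x \<partial>M)"
    using eq cN le[OF N] by simp
  moreover have "(\<integral>\<^sup>+x. f x * indicator N x \<partial>M) \<noteq> \<infinity>"
    using le[OF N] fin2 eq cN by (metis add.commute le_iff_add top_unique infinity_ennreal_def)
  ultimately have "(\<integral>\<^sup>+x. (c - f x) * indicator N x \<partial>M) \<le> 0"
    by (metis add.commute ennreal_add_left_cancel_le)
  then have "(\<integral>\<^sup>+x. (c - f x) * indicator N x \<partial>M) = 0" by simp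
  then have "AE x in M. (c - f x) * indicator N x = 0"
    by (subst (asm) nn_integral_0_iff_AE) auto
  then show ?thesis using AE_space
  proof eventually_elim
    fix x assume x: "(c - f x) * indicator N x = 0" "x \<in> space M"
    show "c \<le> f x"
    proof (rule ccontr)
      assume "\<not> c \<le> f x"
      then have "x \<in> N" "f x < c" using x(2) by (auto simp: N_def not_le)
      then have "c - f x = 0" using x(1) by simp
      then show False using \<open>f x < c\<close> by (metis ennreal_minus_eq_0 not_le)
    qed
  qed
qed



lemma conv_le:
  assumes "0 < c" "c = 1 - d"
  shows "(1 - enn2ereal y \<le> ereal d) \<longleftrightarrow> (ennreal c \<le> y)"
proof (cases y rule: ennreal_cases)
  case (real r)
  then show ?thesis using assms by (auto simp: one_ereal_def)
next
  case top
  then show ?thesis by (simp add: one_ereal_def)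
qed

lemma char:
  assumes P: "prob_space P" and Q: "prob_space Q" and sQ: "sets Q = sets P"
    and ac: "absolutely_continuous P Q"
  shows "contam_div Q P \<le> ereal d \<longleftrightarrow> (\<forall>A\<in>sets P. (1-d) * measure P A \<le> measure Q A)"
proof -
  interpret P: prob_space P by fact
  interpret Q: prob_space Q by fact
  let ?f = "RN_deriv P Q"
  have dens: "density P ?f = Q" using P.density_RN_deriv[OF ac sQ] .
  have QA: "emeasure Q A = (\<integral>\<^sup>+x. ?f x * indicator A x \<partial>P)" if "A \<in> sets P" for A
    using emeasure_density[of ?f P A] dens that by simp
  have cd: "contam_div Q P = esssup P (\<lambda>x. 1 - enn2ereal (?f x))" using ac by (simp add: contam_div_def)
  have meas: "(\<lambda>x. 1 - enn2ereal (?f x)) \<in> borel_measurable P" by measurable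
  show ?thesis
  proof (cases "1 \<le> d")
    case True
    have "contam_div Q P \<le> 1" unfolding cd
      by (rule esssup_I[OF meas]) (auto intro!: AE_I2 simp: ereal_diff_le_self)
    then have "contam_div Q P \<le> ereal d" using True order_trans[of _ 1 "ereal d"] by (simp add: one_ereal_def)
    moreover have "(1-d) * measure P A \<le> measure Q A" for A
      using True by (smt (verit) measure_nonneg mult_nonpos_nonneg)
    ultimately show ?thesis by simp
  next
    case False
    define c where "c = 1 - d"
    have c0: "0 < c" using False c_def by simp
    have "contam_div Q P \<le> ereal d \<longleftrightarrow> (AE x in P. ennreal c \<le> ?f x)"
    proof
      assume le: "contam_div Q P \<le> ereal d"
      show "AE x in P. ennreal c \<le> ?f x"
        using esssup_AE[of "\<lambda>x. 1 - enn2ereal (?f x)" P]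
      proof eventually_elim
        fix x assume "1 - enn2ereal (?f x) \<le> esssup P (\<lambda>x. 1 - enn2ereal (?f x))"
        then have "1 - enn2ereal (?f x) \<le> ereal d" using le cd by simp
        then show "ennreal c \<le> ?f x" using conv_le[OF c0 c_def] by simp
      qed
    next
      assume ae: "AE x in P. ennreal c \<le> ?f x"
      show "contam_div Q P \<le> ereal d" unfolding cd
        by (rule esssup_I[OF meas]) (use ae conv_le[OF c0 c_def] in auto)
    qed
    also have "\<dots> \<longleftrightarrow> (\<forall>A\<in>sets P. c * measure P A \<le> measure Q A)"
    proof
      assume ae: "AE x in P. ennreal c \<le> ?f x"
      show "\<forall>A\<in>sets P. c * measure P A \<le> measure Q A"
      proof
        fix A assume A: "A \<in> sets P"
        have "ennreal c * emeasure P A = (\<integral>\<^sup>+x. ennreal c * indicator A x \<partial>P)"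
          using A by (simp add: nn_integral_cmult_indicator)
        also have "\<dots> \<le> (\<integral>\<^sup>+x. ?f x * indicator A x \<partial>P)"
          using ae by (intro nn_integral_mono_AE) (auto elim!: eventually_mono simp: indicator_def)
        also have "\<dots> = emeasure Q A" using QA[OF A] by simp
        finally have "ennreal (c * measure P A) \<le> ennreal (measure Q A)"
          using c0 A sQ by (simp add: P.emeasure_eq_measure Q.emeasure_eq_measure ennreal_mult)
        then show "c * measure P A \<le> measure Q A"
          by (simp add: ennreal_le_iff)
      qed
    next
      assume H: "\<forall>A\<in>sets P. c * measure P A \<le> measure Q A"
      show "AE x in P. ennreal c \<le> ?f x"
      proof (rule dens_lower)
        fix A assume A: "A \<in> sets P"
        have "ennreal c * emeasure P A = ennreal (c * measure P A)"
          using c0 by (simp add: P.emeasure_eq_measure ennreal_mult)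
        also have "\<dots> \<le> ennreal (measure Q A)" using H A by (simp add: ennreal_leI)
        also have "\<dots> = (\<integral>\<^sup>+x. ?f x * indicator A x \<partial>P)"
          using QA[OF A] by (simp add: Q.emeasure_eq_measure)
        finally show "ennreal c * emeasure P A \<le> (\<integral>\<^sup>+x. ?f x * indicator A x \<partial>P)" .
      qed auto
    qed
    finally show ?thesis using c_def by simp
  qed
qed



lemma contam_range:
  assumes P: "prob_space P" and Q: "prob_space Q" and sQ: "sets Q = sets P"
    and ac: "absolutely_continuous P Q"
  shows "\<exists>D. contam_div Q P = ereal D \<and> 0 \<le> D \<and> D \<le> 1"
proof -
  interpret P: prob_space P by fact
  interpret Q: prob_space Q by fact
  have le1: "contam_div Q P \<le> ereal 1"
    by (subst char[OF P Q sQ ac]) auto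
  have ge0: "contam_div Q P \<ge> 0"
  proof (rule ccontr)
    assume "\<not> contam_div Q P \<ge> 0"
    then have "contam_div Q P < ereal 0" by (simp add: zero_ereal_def not_le)
    then obtain z where z: "contam_div Q P < ereal z" "ereal z < ereal 0" using ereal_dense2 by blast
    then have "\<forall>A\<in>sets P. (1-z) * measure P A \<le> measure Q A"
      using char[OF P Q sQ ac, of z] z(1) by (simp add: less_imp_le)
    then have "(1-z) * measure P (space P) \<le> measure Q (space Q)"
      using sQ sets_eq_imp_space_eq[OF sQ] by (metis sets.top)
    then show False using z(2) by (simp add: P.prob_space Q.prob_space)
  qed
  show ?thesis using le1 ge0 by (cases "contam_div Q P") (auto simp: zero_ereal_def)
qed

lemma ereal_eqI_le:
  fixes x y :: ereal
  assumes "\<And>d. x \<le> ereal d \<longleftrightarrow> y \<le> ereal d"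
  shows "x = y"
proof (rule ccontr)
  assume "x \<noteq> y"
  then consider "x < y" | "y < x" by fastforce
  then show False
  proof cases
    case 1
    then obtain z where "x < ereal z" "ereal z < y" using ereal_dense2 by blast
    then show False using assms[of z] by (metis leD less_imp_le)
  next
    case 2
    then obtain z where "y < ereal z" "ereal z < x" using ereal_dense2 by blast
    then show False using assms[of z] by (metis leD less_imp_le)
  qed
qed

lemma contam_self:
  assumes P: "prob_space P"
  shows "contam_div P P = 0"
proof -
  have ac: "absolutely_continuous P P" by (simp add: absolutely_continuous_def)
  have "contam_div P P \<le> ereal 0" by (subst char[OF P P refl ac]) simp
  moreover obtain D where "contam_div P P = ereal D" "0 \<le> D" using contam_range[OF P P refl ac] by blast
  ultimately show ?thesis by (simp add: zero_ereal_def)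
qed

lemma mixture_props:
  assumes P: "prob_space P" and Q: "prob_space Q" and sQ: "sets Q = sets P"
    and e: "0 \<le> e" "e \<le> 1" and ac: "absolutely_continuous P Q"
  shows "prob_space (mixture e Q P)" "sets (mixture e Q P) = sets P" "space (mixture e Q P) = space P"
    "\<And>A. A \<in> sets P \<Longrightarrow> measure (mixture e Q P) A = e * measure Q A + (1-e) * measure P A"
    "absolutely_continuous P (mixture e Q P)"
proof -
  interpret P: prob_space P by fact
  interpret Q: prob_space Q by fact
  let ?mu = "\<lambda>S. ennreal e * emeasure Q S + ennreal (1 - e) * emeasure P S"
  have mu: "?mu A = ennreal (e * measure Q A + (1-e) * measure P A)" if "A \<in> sets P" for A
    using e by (simp add: P.emeasure_eq_measure Q.emeasure_eq_measure ennreal_mult ennreal_plus[symmetric])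
  have em: "emeasure (mixture e Q P) A = ennreal (e * measure Q A + (1-e) * measure P A)" if A: "A \<in> sets P" for A
    unfolding mixture_def
    by (subst emeasure_lincomb[of P Q _ e "1-e"])
       (use A mu e in \<open>auto simp: P.finite_measure_axioms Q.finite_measure_axioms sQ\<close>)
  show ss: "sets (mixture e Q P) = sets P" unfolding mixture_def by (rule sets.sets_measure_of_eq)
  show sp: "space (mixture e Q P) = space P" unfolding mixture_def by (rule sets.space_measure_of_eq)
  show "prob_space (mixture e Q P)"
  proof (rule prob_spaceI)
    have sQP: "space Q = space P" using sets_eq_imp_space_eq[OF sQ] .
    show "emeasure (mixture e Q P) (space (mixture e Q P)) = 1"
      unfolding sp em[OF sets.top] using P.prob_space Q.prob_space unfolding sQP by simp
  qed
  show "measure (mixture e Q P) A = e * measure Q A + (1-e) * measure P A" if "A \<in> sets P" for A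
    unfolding measure_def[of "mixture e Q P"] em[OF that]
    by (rule enn2real_ennreal) (use e in \<open>simp add: add_nonneg_nonneg\<close>)
  show "absolutely_continuous P (mixture e Q P)"
    unfolding absolutely_continuous_def
  proof
    fix A assume A: "A \<in> null_sets P"
    then have "A \<in> null_sets Q" using ac by (auto simp: absolutely_continuous_def)
    then have "emeasure (mixture e Q P) A = 0"
      using em[of A] A by (simp add: P.emeasure_eq_measure Q.emeasure_eq_measure null_sets_def)
    then show "A \<in> null_sets (mixture e Q P)" using A ss by (auto simp: null_sets_def)
  qed
qed



lemma mixture_contam:
  assumes P: "prob_space P" and Q: "prob_space Q" and sQ: "sets Q = sets P"
    and ac: "absolutely_continuous P Q" and D0: "contam_div Q P = ereal D0"
    and e: "0 \<le> e" "e \<le> 1"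
  shows "contam_div (mixture e Q P) P = ereal (e * D0)"
proof (rule ereal_eqI_le)
  interpret P: prob_space P by fact
  fix d
  note M = mixture_props[OF P Q sQ e ac]
  have "contam_div (mixture e Q P) P \<le> ereal d \<longleftrightarrow>
     (\<forall>A\<in>sets P. (1-d) * measure P A \<le> e * measure Q A + (1-e) * measure P A)"
    using char[OF P M(1) M(2) M(5)] M(4) by simp
  also have "\<dots> \<longleftrightarrow> ereal (e * D0) \<le> ereal d"
  proof (cases "e = 0")
    case True
    have "(\<forall>A\<in>sets P. (1-d) * measure P A \<le> measure P A) \<longleftrightarrow> 0 \<le> d"
    proof
      assume "\<forall>A\<in>sets P. (1-d) * measure P A \<le> measure P A"
      then have "(1-d) * measure P (space P) \<le> measure P (space P)" by blast
      then show "0 \<le> d" by (simp add: P.prob_space)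
    next
      assume "0 \<le> d"
      then show "\<forall>A\<in>sets P. (1-d) * measure P A \<le> measure P A"
        by (simp add: algebra_simps mult_nonneg_nonneg)
    qed
    then show ?thesis using True by simp
  next
    case False
    then have e0: "0 < e" using e by simp
    have "ereal (e * D0) \<le> ereal d \<longleftrightarrow> contam_div Q P \<le> ereal (d / e)"
      using e0 D0 by (simp add: pos_le_divide_eq mult.commute)
    also have "\<dots> \<longleftrightarrow> (\<forall>A\<in>sets P. (1 - d/e) * measure P A \<le> measure Q A)"
      by (rule char[OF P Q sQ ac])
    also have "\<dots> \<longleftrightarrow> (\<forall>A\<in>sets P. (1-d) * measure P A \<le> e * measure Q A + (1-e) * measure P A)"
    proof -
      have "(1 - d/e) * p \<le> q \<longleftrightarrow> (1-d) * p \<le> e * q + (1-e) * p" for p q :: real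
      proof -
        have "(1 - d/e) * p \<le> q \<longleftrightarrow> e * ((1 - d/e) * p) \<le> e * q"
          using e0 by simp
        also have "e * ((1 - d/e) * p) = (e - d) * p" using e0 by (simp add: field_simps)
        finally show ?thesis by (simp add: algebra_simps)
      qed
      then show ?thesis by simp
    qed
    finally show ?thesis by simp
  qed
  finally show "contam_div (mixture e Q P) P \<le> ereal d \<longleftrightarrow> ereal (e * D0) \<le> ereal d" .
qed

lemma D2_lemma:
  assumes P: "prob_space P" and Q: "prob_space Q" and sQ: "sets Q = sets P"
    and ac: "absolutely_continuous P Q"
  shows "continuous_on {0..1} (\<lambda>e. contam_div (mixture e Q P) P)"
proof -
  obtain D0 where D0: "contam_div Q P = ereal D0" using contam_range[OF P Q sQ ac] by blast
  have "continuous_on {0..1} (\<lambda>e. ereal (e * D0))"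
    by (intro continuous_on_ereal continuous_intros)
  then show ?thesis
    by (rule continuous_on_cong[THEN iffD1, rotated 2])
       (auto simp: mixture_contam[OF P Q sQ ac D0])
qed

lemma restr_facts:
  assumes P: "prob_space P" and sub: "subalgebra P E"
  shows "prob_space (restr_to_subalg P E)" "sets (restr_to_subalg P E) = sets E"
    "\<And>A. A \<in> sets E \<Longrightarrow> measure (restr_to_subalg P E) A = measure P A"
  using prob_space_restr_to_subalg[OF sub P] sets_restr_to_subalg[OF sub]
    emeasure_restr_to_subalg[OF sub] by (auto simp: measure_def)

lemma D4_lemma:
  assumes P: "prob_space P" and Q: "prob_space Q" and sQ: "sets Q = sets P"
    and subP: "subalgebra P E"
  shows "contam_div (restr_to_subalg Q E) (restr_to_subalg P E) \<le> contam_div Q P"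
proof (cases "absolutely_continuous P Q")
  case False
  then show ?thesis by (simp add: contam_div_def)
next
  case ac: True
  have subQ: "subalgebra Q E" using subP sQ sets_eq_imp_space_eq[OF sQ] by (simp add: subalgebra_def)
  note RP = restr_facts[OF P subP] and RQ = restr_facts[OF Q subQ]
  have ac': "absolutely_continuous (restr_to_subalg P E) (restr_to_subalg Q E)"
    using ac null_sets_restr_to_subalg[OF subP] null_sets_restr_to_subalg[OF subQ]
    by (auto simp: absolutely_continuous_def)
  obtain D0 where D0: "contam_div Q P = ereal D0" using contam_range[OF P Q sQ ac] by blast
  have "\<forall>A\<in>sets P. (1-D0) * measure P A \<le> measure Q A"
    using char[OF P Q sQ ac, of D0] D0 by simp
  then have "\<forall>A\<in>sets E. (1-D0) * measure P A \<le> measure Q A"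
    using subP by (auto simp: subalgebra_def)
  then have "contam_div (restr_to_subalg Q E) (restr_to_subalg P E) \<le> ereal D0"
    using char[OF RP(1) RQ(1) _ ac', of D0] RP RQ by simp
  then show ?thesis using D0 by simp
qed



lemma esssup_restr:
  fixes h :: "'a \<Rightarrow> ereal"
  assumes sub: "subalgebra P E" and h[measurable]: "h \<in> borel_measurable E"
  shows "esssup (restr_to_subalg P E) h = esssup P h"
proof -
  have h1: "h \<in> borel_measurable (restr_to_subalg P E)" using measurable_in_subalg[OF sub h] .
  have h2: "h \<in> borel_measurable P" using measurable_from_subalg[OF sub h] .
  have "(AE x in restr_to_subalg P E. h x \<le> z) \<longleftrightarrow> (AE x in P. h x \<le> z)" for z
  proof
    assume "AE x in restr_to_subalg P E. h x \<le> z"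
    then show "AE x in P. h x \<le> z" using AE_restr_to_subalg[OF sub] by blast
  next
    assume "AE x in P. h x \<le> z"
    then show "AE x in restr_to_subalg P E. h x \<le> z"
      by (rule AE_restr_to_subalg2[OF sub]) measurable
  qed
  then show ?thesis by (simp add: esssup_eq_AE[OF h1] esssup_eq_AE[OF h2])
qed

lemma RN_deriv_not_ac:
  assumes "\<not> absolutely_continuous M N"
  shows "RN_deriv M N = (\<lambda>_. 0)"
  using assms absolutely_continuousI_density unfolding RN_deriv_def by metis

lemma D5_lemma:
  assumes P: "prob_space P" and Q: "prob_space Q" and sQ: "sets Q = sets P"
    and subP: "subalgebra P E"
    and eq: "AE x in P. RN_deriv (restr_to_subalg P E) (restr_to_subalg Q E) x = RN_deriv P Q x"
  shows "contam_div (restr_to_subalg Q E) (restr_to_subalg P E) = contam_div Q P"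
proof -
  have subQ: "subalgebra Q E" using subP sQ sets_eq_imp_space_eq[OF sQ] by (simp add: subalgebra_def)
  note RP = restr_facts[OF P subP] and RQ = restr_facts[OF Q subQ]
  let ?g = "RN_deriv (restr_to_subalg P E) (restr_to_subalg Q E)"
  have gE[measurable]: "?g \<in> borel_measurable E"
    using measurable_in_subalg'[OF subP borel_measurable_RN_deriv] .
  have gP[measurable]: "?g \<in> borel_measurable P" using measurable_from_subalg[OF subP gE] .
  show ?thesis
  proof (cases "absolutely_continuous P Q")
    case ac: True
    have ac': "absolutely_continuous (restr_to_subalg P E) (restr_to_subalg Q E)"
      using ac null_sets_restr_to_subalg[OF subP] null_sets_restr_to_subalg[OF subQ]
      by (auto simp: absolutely_continuous_def)
    have "contam_div (restr_to_subalg Q E) (restr_to_subalg P E)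
        = esssup (restr_to_subalg P E) (\<lambda>x. 1 - enn2ereal (?g x))"
      using ac' by (simp add: contam_div_def)
    also have "\<dots> = esssup P (\<lambda>x. 1 - enn2ereal (?g x))"
      by (rule esssup_restr[OF subP]) measurable
    also have "\<dots> = esssup P (\<lambda>x. 1 - enn2ereal (RN_deriv P Q x))"
      by (rule esssup_AE_cong) (use eq in \<open>auto elim!: eventually_mono\<close>)
    also have "\<dots> = contam_div Q P" using ac by (simp add: contam_div_def)
    finally show ?thesis .
  next
    case nac: False
    have "\<not> absolutely_continuous (restr_to_subalg P E) (restr_to_subalg Q E)"
    proof
      assume ac': "absolutely_continuous (restr_to_subalg P E) (restr_to_subalg Q E)"
      interpret RP: prob_space "restr_to_subalg P E" by (rule RP(1))
      interpret RQ: prob_space "restr_to_subalg Q E" by (rule RQ(1))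
      have dens: "density (restr_to_subalg P E) ?g = restr_to_subalg Q E"
        using RP.density_RN_deriv[OF ac'] RP RQ by simp
      have "1 = emeasure (restr_to_subalg Q E) (space (restr_to_subalg Q E))"
        using RQ.emeasure_space_1 by simp
      also have "\<dots> = emeasure (density (restr_to_subalg P E) ?g) (space (restr_to_subalg P E))"
        using dens by (simp add: space_restr_to_subalg sets_eq_imp_space_eq[OF sQ])
      also have "\<dots> = (\<integral>\<^sup>+x. ?g x * indicator (space (restr_to_subalg P E)) x \<partial>restr_to_subalg P E)"
        by (rule emeasure_density) auto
      also have "\<dots> = (\<integral>\<^sup>+x. ?g x \<partial>restr_to_subalg P E)"
        by (rule nn_integral_cong) (simp add: indicator_def)
      also have "\<dots> = (\<integral>\<^sup>+x. ?g x \<partial>P)" by (rule nn_integral_subalgebra2[OF subP gE])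
      also have "\<dots> = (\<integral>\<^sup>+x. 0 \<partial>P)"
        by (rule nn_integral_cong_AE) (use eq in \<open>unfold RN_deriv_not_ac[OF nac]\<close>)
      finally show False by simp
    qed
    then show ?thesis using nac by (simp add: contam_div_def)
  qed
qed



lemma char_set:
  assumes PX: "P \<in> prob_measures X" and eta: "\<eta> > 0"
  shows "{Q\<in>prob_measures X. contam_div Q P \<le> ereal \<eta>} =
        {Q\<in>prob_measures X. \<exists>R\<in>prob_measures X.
           absolutely_continuous P R \<and>
           (\<forall>S\<in>sets X. measure Q S = (1 - \<eta>) * measure P S + \<eta> * measure R S)}"
proof -
  have P: "prob_space P" and sP: "sets P = sets X" and spP: "space P = space X"
    using PX by (auto simp: prob_measures_def)
  interpret P: prob_space P by fact
  show ?thesis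
  proof (intro set_eqI iffI)
    fix Q assume "Q \<in> {Q\<in>prob_measures X. contam_div Q P \<le> ereal \<eta>}"
    then have QX: "Q \<in> prob_measures X" and le: "contam_div Q P \<le> ereal \<eta>" by auto
    have Q: "prob_space Q" and sQ: "sets Q = sets P" using QX sP by (auto simp: prob_measures_def)
    interpret Q: prob_space Q by fact
    have ac: "absolutely_continuous P Q"
      using le by (cases "absolutely_continuous P Q") (auto simp: contam_div_def)
    have H: "\<forall>A\<in>sets P. (1-\<eta>) * measure P A \<le> measure Q A"
      using char[OF P Q sQ ac] le by simp
    define a where "a = 1/\<eta>"
    define b where "b = -(1-\<eta>)/\<eta>"
    have nn: "0 \<le> a * measure Q A + b * measure P A" if "A \<in> sets P" for A
    proof -
      have "a * measure Q A + b * measure P A = (measure Q A - (1-\<eta>) * measure P A) / \<eta>"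
        using eta by (simp add: a_def b_def field_simps)
      then show ?thesis using H that eta by simp
    qed
    define R where "R = measure_of (space P) (sets P) (\<lambda>A. ennreal (a * measure Q A + b * measure P A))"
    have emR: "emeasure R A = ennreal (a * measure Q A + b * measure P A)" if "A \<in> sets P" for A
      unfolding R_def
      by (rule emeasure_lincomb[OF P.finite_measure_axioms Q.finite_measure_axioms sQ _ nn that]) auto
    have mR: "measure R A = a * measure Q A + b * measure P A" if "A \<in> sets P" for A
      unfolding measure_def[of R] emR[OF that] using nn[OF that] by simp
    have sR: "sets R = sets P" unfolding R_def by (rule sets.sets_measure_of_eq)
    have spR: "space R = space P" unfolding R_def by (rule sets.space_measure_of_eq)
    have sQP: "space Q = space P" using sets_eq_imp_space_eq[OF sQ] .
    have R: "prob_space R"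
    proof (rule prob_spaceI)
      have "a * measure Q (space P) + b * measure P (space P) = 1"
        using P.prob_space Q.prob_space eta unfolding sQP by (simp add: a_def b_def field_simps)
      then show "emeasure R (space R) = 1" unfolding spR emR[OF sets.top] by simp
    qed
    have acR: "absolutely_continuous P R"
      unfolding absolutely_continuous_def
    proof
      fix A assume A: "A \<in> null_sets P"
      then have "A \<in> null_sets Q" using ac by (auto simp: absolutely_continuous_def)
      then have "emeasure R A = 0"
        using emR[of A] A by (simp add: P.emeasure_eq_measure Q.emeasure_eq_measure null_sets_def)
      then show "A \<in> null_sets R" using A sR by (auto simp: null_sets_def)
    qed
    have RX: "R \<in> prob_measures X" using R sR spR sP spP by (simp add: prob_measures_def)
    have "\<forall>S\<in>sets X. measure Q S = (1 - \<eta>) * measure P S + \<eta> * measure R S"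
    proof
      fix S assume "S \<in> sets X"
      then have S: "S \<in> sets P" using sP by simp
      show "measure Q S = (1 - \<eta>) * measure P S + \<eta> * measure R S"
        unfolding mR[OF S] using eta by (simp add: a_def b_def field_simps)
    qed
    then show "Q \<in> {Q\<in>prob_measures X. \<exists>R\<in>prob_measures X.
           absolutely_continuous P R \<and>
           (\<forall>S\<in>sets X. measure Q S = (1 - \<eta>) * measure P S + \<eta> * measure R S)}"
      using QX RX acR by blast
  next
    fix Q assume "Q \<in> {Q\<in>prob_measures X. \<exists>R\<in>prob_measures X.
           absolutely_continuous P R \<and>
           (\<forall>S\<in>sets X. measure Q S = (1 - \<eta>) * measure P S + \<eta> * measure R S)}"
    then obtain R where QX: "Q \<in> prob_measures X" and RX: "R \<in> prob_measures X"
      and acR: "absolutely_continuous P R"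
      and eqQ: "\<forall>S\<in>sets X. measure Q S = (1 - \<eta>) * measure P S + \<eta> * measure R S" by blast
    have Q: "prob_space Q" and sQ: "sets Q = sets P" using QX sP by (auto simp: prob_measures_def)
    have R: "prob_space R" and sR: "sets R = sets P" using RX sP by (auto simp: prob_measures_def)
    interpret Q: prob_space Q by fact
    interpret R: prob_space R by fact
    have ac: "absolutely_continuous P Q"
      unfolding absolutely_continuous_def
    proof
      fix A assume A: "A \<in> null_sets P"
      then have "A \<in> null_sets R" using acR by (auto simp: absolutely_continuous_def)
      then have "measure R A = 0" "measure P A = 0" using A by (auto simp: measure_def null_sets_def)
      then have "measure Q A = 0" using eqQ A sP by (auto simp: null_sets_def)
      then have "emeasure Q A = 0" by (simp add: Q.emeasure_eq_measure)
      then show "A \<in> null_sets Q" using A sQ by (auto simp: null_sets_def)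
    qed
    have "\<forall>A\<in>sets P. (1-\<eta>) * measure P A \<le> measure Q A"
      using eqQ sP eta by (simp add: measure_nonneg)
    then have "contam_div Q P \<le> ereal \<eta>" using char[OF P Q sQ ac] by simp
    then show "Q \<in> {Q\<in>prob_measures X. contam_div Q P \<le> ereal \<eta>}" using QX by simp
  qed
qed



theorem lemma2:
  fixes lo hi :: real
  shows
    \<comment> \<open>(D1)\<close>
    "(\<forall>A. subalgebra (Theta_B lo hi) A \<longrightarrow>
        (\<forall>P\<in>prob_measures A. \<forall>Q\<in>prob_measures A. Q = P \<longrightarrow> contam_div Q P = 0))
     \<and>
    \<comment> \<open>(D2)\<close>
     (\<forall>A. subalgebra (Theta_B lo hi) A \<longrightarrow>
        (\<forall>P\<in>prob_measures A. \<forall>Q\<in>prob_measures A.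
           absolutely_continuous P Q \<and> (\<exists>C::real. AE x in P. RN_deriv P Q x \<le> ennreal C)
           \<longrightarrow> continuous_on {0..1} (\<lambda>e. contam_div (mixture e Q P) P)))
     \<and>
    \<comment> \<open>(D3)\<close>
     (\<forall>A. subalgebra (Theta_B lo hi) A \<longrightarrow>
        (\<forall>P\<in>prob_measures A. \<forall>Q\<in>prob_measures A.
           contam_div Q P < \<infinity> \<longrightarrow> absolutely_continuous P Q))
     \<and>
    \<comment> \<open>(D4)\<close>
     (\<forall>A. subalgebra (Theta_B lo hi) A \<longrightarrow>
        (\<forall>P\<in>prob_measures A. \<forall>Q\<in>prob_measures A. \<forall>E. subalgebra A E \<longrightarrow>
           contam_div (restr_to_subalg Q E) (restr_to_subalg P E) \<le> contam_div Q P))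
     \<and>
    \<comment> \<open>(D5)\<close>
     (\<forall>A. subalgebra (Theta_B lo hi) A \<longrightarrow>
        (\<forall>P\<in>prob_measures A. \<forall>Q\<in>prob_measures A. \<forall>E. subalgebra A E \<longrightarrow>
           (AE x in P. RN_deriv (restr_to_subalg P E) (restr_to_subalg Q E) x = RN_deriv P Q x)
           \<longrightarrow> contam_div (restr_to_subalg Q E) (restr_to_subalg P E) = contam_div Q P))
     \<and>
    \<comment> \<open>Contamination neighbourhood characterization\<close>
     (\<forall>P\<in>prob_measures (Theta_B lo hi). \<forall>\<eta>::real. \<eta> > 0 \<longrightarrow>
        {Q\<in>prob_measures (Theta_B lo hi). contam_div Q P \<le> ereal \<eta>} =
        {Q\<in>prob_measures (Theta_B lo hi). \<exists>R\<in>prob_measures (Theta_B lo hi).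
           absolutely_continuous P R \<and>
           (\<forall>S\<in>sets (Theta_B lo hi). measure Q S = (1 - \<eta>) * measure P S + \<eta> * measure R S)})"
proof -
  have pm: "prob_space P" "sets P = sets A" "space P = space A" if "P \<in> prob_measures A" for P A :: "real measure"
    using that by (auto simp: prob_measures_def)
  have sub: "subalgebra P E" if "subalgebra A E" "P \<in> prob_measures A" for P A E :: "real measure"
    using that pm[OF that(2)] by (auto simp: subalgebra_def)
  show ?thesis
  proof (intro conjI allI impI ballI)
    fix A P Q :: "real measure" assume a: "P \<in> prob_measures A" and b: "Q = P"
    show "contam_div Q P = 0" using contam_self[OF pm(1)[OF a]] b by simp
  next
    fix A P Q :: "real measure" assume P: "P \<in> prob_measures A" and Q: "Q \<in> prob_measures A"
      and h: "absolutely_continuous P Q \<and> (\<exists>C::real. AE x in P. RN_deriv P Q x \<le> ennreal C)"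
    show "continuous_on {0..1} (\<lambda>e. contam_div (mixture e Q P) P)"
      using D2_lemma[OF pm(1)[OF P] pm(1)[OF Q]] pm(2)[OF P] pm(2)[OF Q] h by simp
  next
    fix A P Q :: "real measure" assume "contam_div Q P < \<infinity>"
    then show "absolutely_continuous P Q" by (auto simp: contam_div_def split: if_splits)
  next
    fix A P Q E :: "real measure" assume A: "subalgebra (Theta_B lo hi) A" and P: "P \<in> prob_measures A" and Q: "Q \<in> prob_measures A"
      and E: "subalgebra A E"
    show "contam_div (restr_to_subalg Q E) (restr_to_subalg P E) \<le> contam_div Q P"
      using D4_lemma[OF pm(1)[OF P] pm(1)[OF Q] _ sub[OF E P]] pm(2)[OF P] pm(2)[OF Q] by simp
  next
    fix A P Q E :: "real measure" assume A: "subalgebra (Theta_B lo hi) A" and P: "P \<in> prob_measures A" and Q: "Q \<in> prob_measures A"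
      and E: "subalgebra A E"
      and h: "AE x in P. RN_deriv (restr_to_subalg P E) (restr_to_subalg Q E) x = RN_deriv P Q x"
    show "contam_div (restr_to_subalg Q E) (restr_to_subalg P E) = contam_div Q P"
      using D5_lemma[OF pm(1)[OF P] pm(1)[OF Q] _ sub[OF E P] h] pm(2)[OF P] pm(2)[OF Q] by simp
  next
    fix P and \<eta> :: real assume "P \<in> prob_measures (Theta_B lo hi)" "\<eta> > 0"
    then show "{Q\<in>prob_measures (Theta_B lo hi). contam_div Q P \<le> ereal \<eta>} =
        {Q\<in>prob_measures (Theta_B lo hi). \<exists>R\<in>prob_measures (Theta_B lo hi).
           absolutely_continuous P R \<and>
           (\<forall>S\<in>sets (Theta_B lo hi). measure Q S = (1 - \<eta>) * measure P S + \<eta> * measure R S)}"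
      by (rule char_set)
  qed
qed


end
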